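(* Let $f$ be analytic on $\mathbb{D}$ with $f(z)=z+\sum_{n=2}^{\infty}a_nz^n$ and $\operatorname{Re}f'(z)>0$ for all $z\in\mathbb{D}$, and let $\Gamma_1=-\frac12a_2$, $\Gamma_2=-\frac12\left(a_3-\frac32a_2^2\right)$. Then $$-\frac13\le|\Gamma_2|-|\Gamma_1|\le\frac13.$$ Both inequalities are sharp.
   Context: $\mathbb{D}=\{z\in\mathbb{C}:|z|<1\}$. The class of such $f$ is the class $\mathcal{R}$ of functions of bounded turning. $\Gamma_1,\Gamma_2$ are the first two logarithmic inverse coefficients: with $F=f^{-1}$ near $0$, $\log\frac{F(w)}{w}=2\sum_{n\ge1}\Gamma_nw^n$ near $0$. *)

theory Defs
  imports "HOL-Complex_Analysis.Complex_Analysis"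
begin

definition bounded_turning :: "(complex \<Rightarrow> complex) \<Rightarrow> bool" where
  "bounded_turning f \<longleftrightarrow>
     f holomorphic_on ball 0 1 \<and> f 0 = 0 \<and> deriv f 0 = 1 \<and>
     (\<forall>z\<in>ball 0 1. Re (deriv f z) > 0)"

definition taylor_coeff :: "(complex \<Rightarrow> complex) \<Rightarrow> nat \<Rightarrow> complex" where
  "taylor_coeff f n = (deriv ^^ n) f 0 / of_nat (fact n)"

definition Gamma1 :: "(complex \<Rightarrow> complex) \<Rightarrow> complex" where
  "Gamma1 f = - taylor_coeff f 2 / 2"

definition Gamma2 :: "(complex \<Rightarrow> complex) \<Rightarrow> complex" where
  "Gamma2 f = - (taylor_coeff f 3 - 3 / 2 * (taylor_coeff f 2)^2) / 2"

end

theory Submission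
  imports Defs
begin

lemma norm_sq_identity:
  fixes b w :: complex
  shows "(cmod (1 - cnj b * w))\<^sup>2 - (cmod (w - b))\<^sup>2 = (1 - (cmod b)\<^sup>2) * (1 - (cmod w)\<^sup>2)"
  unfolding cmod_power2 by (simp add: power2_eq_square algebra_simps)

lemma schwarz_pick0:
  assumes holh: "h holomorphic_on ball 0 1"
    and lt: "\<And>z. z \<in> ball 0 1 \<Longrightarrow> cmod (h z) < 1"
  shows "cmod (deriv h 0) \<le> 1 - (cmod (h 0))\<^sup>2"
proof -
  define b where "b = h 0"
  have b1: "cmod b < 1" using lt[of 0] by (simp add: b_def)
  have den: "1 - cnj b * h z \<noteq> 0" if "z \<in> ball 0 1" for z
  proof
    assume "1 - cnj b * h z = 0"
    then have "cnj b * h z = 1" by simp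
    then have "cmod b * cmod (h z) = 1" by (metis complex_mod_cnj norm_mult norm_one)
    moreover have "cmod b * cmod (h z) < 1"
      using b1 lt[OF that] by (smt (verit) mult_left_le norm_ge_zero)
    ultimately show False by simp
  qed
  define k where "k z = (h z - b) / (1 - cnj b * h z)" for z
  have holk: "k holomorphic_on ball 0 1"
    unfolding k_def using holh den by (intro holomorphic_intros) auto
  have k0: "k 0 = 0" by (simp add: k_def b_def)
  have klt: "cmod (k z) < 1" if "cmod z < 1" for z
  proof -
    have z: "z \<in> ball 0 1" using that by simp
    have "(cmod (1 - cnj b * h z))\<^sup>2 - (cmod (h z - b))\<^sup>2 > 0"
      unfolding norm_sq_identity
    proof (rule mult_pos_pos)
      show "0 < 1 - (cmod b)\<^sup>2" using b1 by (simp add: power_less_one_iff abs_square_less_1)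
      show "0 < 1 - (cmod (h z))\<^sup>2" using lt[OF z] by (simp add: abs_square_less_1)
    qed
    then have "cmod (h z - b) < cmod (1 - cnj b * h z)"
      by (smt (verit) norm_ge_zero power_mono)
    then show ?thesis using den[OF z] by (simp add: k_def norm_divide divide_less_eq)
  qed
  have "norm (deriv k 0) \<le> 1"
    using Schwarz_Lemma(2)[OF holk k0 klt, of 0] by simp
  moreover have "(k has_field_derivative (deriv h 0 / (1 - cnj b * b))) (at 0)"
  proof -
    have hd: "(h has_field_derivative deriv h 0) (at 0)"
      using holomorphic_derivI[OF holh] by simp
    have "(k has_field_derivative
        ((deriv h 0 * (1 - cnj b * h 0) + (h 0 - b) * (cnj b * deriv h 0)) / (1 - cnj b * h 0)^2)) (at 0)"
      unfolding k_def using den[of 0]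
      by (auto intro!: derivative_eq_intros hd simp: power2_eq_square)
    moreover have "1 - cnj b * b \<noteq> 0" using den[of 0] by (simp add: b_def)
    ultimately show ?thesis by (simp add: b_def power2_eq_square)
  qed
  ultimately have "cmod (deriv h 0 / (1 - cnj b * b)) \<le> 1"
    by (simp add: DERIV_imp_deriv)
  moreover have eq: "1 - cnj b * b = of_real (1 - (cmod b)\<^sup>2)"
    using complex_norm_square[of b] by (simp add: mult.commute)
  moreover have pos: "0 < 1 - (cmod b)\<^sup>2" using b1 by (simp add: abs_square_less_1)
  moreover have "cmod (deriv h 0 / (1 - cnj b * b)) = cmod (deriv h 0) / (1 - (cmod b)\<^sup>2)"
    using pos by (simp only: eq norm_divide norm_of_real abs_of_pos)
  ultimately have "cmod (deriv h 0) / (1 - (cmod b)\<^sup>2) \<le> 1"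
    by simp
  then show ?thesis using \<open>0 < 1 - (cmod b)\<^sup>2\<close>
    by (simp add: b_def divide_le_eq)
qed


lemma schwarz_pick_weak:
  assumes holh: "h holomorphic_on ball 0 1"
    and le: "\<And>z. z \<in> ball 0 1 \<Longrightarrow> cmod (h z) \<le> 1"
  shows "cmod (deriv h 0) \<le> 1 - (cmod (h 0))\<^sup>2"
proof -
  define A where "A = cmod (deriv h 0)"
  define B where "B = (cmod (h 0))\<^sup>2"
  have key: "t * A + t\<^sup>2 * B \<le> 1" if t: "t \<in> {0<..<1}" for t :: real
  proof -
    have hol2: "(\<lambda>z. complex_of_real t * h z) holomorphic_on ball 0 1"
      using holh by (intro holomorphic_intros)
    have lt2: "cmod (complex_of_real t * h z) < 1" if "z \<in> ball 0 1" for z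
    proof -
      have "cmod (complex_of_real t * h z) = t * cmod (h z)" using t by (simp add: norm_mult)
      also have "\<dots> \<le> t" using le[OF that] t by (simp add: mult_left_le)
      also have "\<dots> < 1" using t by simp
      finally show ?thesis .
    qed
    have "((\<lambda>z. complex_of_real t * h z) has_field_derivative complex_of_real t * deriv h 0) (at 0)"
      using holomorphic_derivI[OF holh, of 0 UNIV] by (auto intro!: derivative_eq_intros)
    then have d: "deriv (\<lambda>z. complex_of_real t * h z) 0 = complex_of_real t * deriv h 0"
      by (rule DERIV_imp_deriv)
    have "cmod (complex_of_real t * deriv h 0) \<le> 1 - (cmod (complex_of_real t * h 0))\<^sup>2"
      using schwarz_pick0[OF hol2 lt2] d by simp
    then show ?thesis using t
      by (simp add: A_def B_def norm_mult power_mult_distrib)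
  qed
  have "((\<lambda>t. t * A + t\<^sup>2 * B) \<longlongrightarrow> 1 * A + 1\<^sup>2 * B) (at_left (1::real))"
    by (intro tendsto_intros)
  moreover have "eventually (\<lambda>t. t * A + t\<^sup>2 * B \<le> 1) (at_left (1::real))"
  proof -
    have "eventually (\<lambda>x. x \<in> {0<..<1}) (at_left (1::real))"
      by (rule eventually_at_left_real) simp
    then show ?thesis by eventually_elim (rule key)
  qed
  ultimately have "1 * A + 1\<^sup>2 * B \<le> 1"
    by (rule tendsto_upperbound) (simp add: trivial_limit_at_left_real)
  then show ?thesis by (simp add: A_def B_def)
qed

lemma carath:
  assumes holp: "p holomorphic_on ball 0 1" and p0: "p 0 = 1"
    and re: "\<And>z. z \<in> ball 0 1 \<Longrightarrow> Re (p z) > 0"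
  shows "cmod (deriv (deriv p) 0 - (deriv p 0)\<^sup>2) \<le> 4 - (cmod (deriv p 0))\<^sup>2"
proof -
  have pn: "p z + 1 \<noteq> 0" if "z \<in> ball 0 1" for z
  proof
    assume "p z + 1 = 0"
    then have "Re (p z + 1) = 0" by simp
    then show False using re[OF that] by simp
  qed
  define w where "w z = (p z - 1) / (p z + 1)" for z
  have holw: "w holomorphic_on ball 0 1"
    unfolding w_def using holp pn by (intro holomorphic_intros) auto
  have w0: "w 0 = 0" by (simp add: w_def p0)
  have wlt: "cmod (w z) < 1" if "cmod z < 1" for z
  proof -
    have z: "z \<in> ball 0 1" using that by simp
    have "(cmod (p z - 1))\<^sup>2 < (cmod (p z + 1))\<^sup>2"
      using re[OF z] unfolding cmod_power2 by (simp add: power2_eq_square algebra_simps)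
    then have "cmod (p z - 1) < cmod (p z + 1)"
      by (rule power2_less_imp_less) simp
    then show ?thesis using pn[OF z] by (simp add: w_def norm_divide divide_less_eq)
  qed
  obtain h where holh: "h holomorphic_on ball 0 1" and wh: "\<And>z. norm z < 1 \<Longrightarrow> w z = z * h z"
    and dw: "deriv w 0 = h 0"
    using Schwarz3[OF holw w0] by blast
  have hle: "cmod (h z) \<le> 1" if "z \<in> ball 0 1" for z
  proof (cases "z = 0")
    case True
    then show ?thesis using Schwarz_Lemma(2)[OF holw w0 wlt, of 0] dw by simp
  next
    case False
    have "cmod (w z) \<le> cmod z" using Schwarz_Lemma(1)[OF holw w0 wlt, of z] that by simp
    then have "cmod z * cmod (h z) \<le> cmod z * 1" using wh[of z] that by (simp add: norm_mult)
    then show ?thesis using False by simp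
  qed
  have SP: "cmod (deriv h 0) \<le> 1 - (cmod (h 0))\<^sup>2"
    by (rule schwarz_pick_weak[OF holh hle])
  have uh: "1 - z * h z \<noteq> 0" if "z \<in> ball 0 1" for z
    using wlt[of z] wh[of z] that by auto
  define q where "q z = (1 + z * h z) / (1 - z * h z)" for z
  have pq: "p z = q z" if "z \<in> ball 0 1" for z
  proof -
    have "w z = z * h z" using wh that by simp
    then show ?thesis using pn[OF that] uh[OF that] unfolding q_def w_def[symmetric]
      by (auto simp: w_def field_simps)
  qed
  define D1 where "D1 z = 2 * (h z + z * deriv h z) / (1 - z * h z)\<^sup>2" for z
  have qd: "(q has_field_derivative D1 z) (at z)" if z: "z \<in> ball 0 1" for z
  proof -
    have hd: "(h has_field_derivative deriv h z) (at z)"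
      using holomorphic_derivI[OF holh _ z] by simp
    have hu: "((\<lambda>z. z * h z) has_field_derivative (1 * h z + deriv h z * z)) (at z)"
      by (rule DERIV_mult[OF DERIV_ident hd])
    have "((\<lambda>z. (1 + z * h z) / (1 - z * h z)) has_field_derivative
        ((0 + (1 * h z + deriv h z * z)) * (1 - z * h z) - (1 + z * h z) * (0 - (1 * h z + deriv h z * z)))
          / ((1 - z * h z) * (1 - z * h z))) (at z)"
      by (intro DERIV_divide DERIV_add DERIV_diff DERIV_const hu uh[OF z])
    moreover have "((0 + (1 * h z + deriv h z * z)) * (1 - z * h z) - (1 + z * h z) * (0 - (1 * h z + deriv h z * z)))
          / ((1 - z * h z) * (1 - z * h z)) = D1 z"
      unfolding D1_def using uh[OF z] by (simp add: power2_eq_square field_simps) (simp add: algebra_simps)?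
    ultimately show ?thesis unfolding q_def by simp
  qed
  have dp: "deriv p z = D1 z" if z: "z \<in> ball 0 1" for z
  proof -
    have "eventually (\<lambda>x. x \<in> ball 0 1) (nhds z)"
      using z by (intro eventually_nhds_in_open) auto
    then have "eventually (\<lambda>x. p x = q x) (nhds z)"
      by eventually_elim (rule pq)
    then have "deriv p z = deriv q z" by (rule deriv_cong_ev) simp
    then show ?thesis using DERIV_imp_deriv[OF qd[OF z]] by simp
  qed
  have ddp: "deriv (deriv p) 0 = deriv D1 0"
  proof -
    have "eventually (\<lambda>x. x \<in> ball 0 1) (nhds (0::complex))"
      by (intro eventually_nhds_in_open) auto
    then have "eventually (\<lambda>x. deriv p x = D1 x) (nhds 0)"
      by eventually_elim (rule dp)
    then show ?thesis by (rule deriv_cong_ev) simp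
  qed
  have D1d: "(D1 has_field_derivative (4 * deriv h 0 + 4 * (h 0)\<^sup>2)) (at 0)"
  proof -
    have hd: "(h has_field_derivative deriv h 0) (at 0)"
      using holomorphic_derivI[OF holh, of 0] by simp
    have hdd: "(deriv h has_field_derivative deriv (deriv h) 0) (at 0)"
      using holomorphic_derivI[OF holomorphic_deriv[OF holh], of 0] by simp
    show ?thesis unfolding D1_def
      by (auto intro!: derivative_eq_intros hd hdd simp: power2_eq_square)
  qed
  have "deriv p 0 = 2 * h 0" using dp[of 0] by (simp add: D1_def)
  moreover have "deriv (deriv p) 0 = 4 * deriv h 0 + 4 * (h 0)\<^sup>2"
    using ddp DERIV_imp_deriv[OF D1d] by simp
  ultimately show ?thesis using SP
    by (simp add: norm_mult power_mult_distrib)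
qed


lemma re_M:
  fixes w :: complex
  assumes "cmod w < 1"
  shows "Re ((1 + w) / (1 - w)) > 0"
proof -
  have w1: "1 - w \<noteq> 0" using assms by auto
  have "(cmod w)\<^sup>2 < 1" using assms by (simp add: abs_square_less_1)
  then have "(Re w)\<^sup>2 + (Im w)\<^sup>2 < 1" unfolding cmod_power2 .
  then have num: "Re (1 + w) * Re (1 - w) + Im (1 + w) * Im (1 - w) > 0"
    by (simp add: power2_eq_square algebra_simps)
  have "(cmod (1 - w))\<^sup>2 > 0" using w1 by simp
  then show ?thesis unfolding Re_divide' using num by simp
qed

lemma deriv_eq_on_ball:
  assumes "\<And>z. z \<in> ball 0 1 \<Longrightarrow> f z = g z" "x \<in> ball (0::complex) 1"
  shows "deriv f x = deriv g x"
proof -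
  have "eventually (\<lambda>z. z \<in> ball 0 1) (nhds x)"
    using assms(2) by (intro eventually_nhds_in_open) auto
  then have "eventually (\<lambda>z. f z = g z) (nhds x)"
    by eventually_elim (rule assms(1))
  then show ?thesis by (rule deriv_cong_ev) simp
qed

lemma exists_bt:
  assumes holp: "p holomorphic_on ball 0 1" and p0: "p 0 = 1"
    and re: "\<And>z. z \<in> ball 0 1 \<Longrightarrow> Re (p z) > 0"
  shows "\<exists>f. bounded_turning f \<and> (deriv ^^ 2) f 0 = deriv p 0
             \<and> (deriv ^^ 3) f 0 = deriv (deriv p) 0"
proof -
  obtain g where g: "\<And>x. x \<in> ball 0 1 \<Longrightarrow> (g has_field_derivative p x) (at x within ball 0 1)"
    using holomorphic_convex_primitive'[OF convex_ball open_ball holp] by blast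
  define f where "f z = g z - g 0" for z
  have fd: "(f has_field_derivative p x) (at x)" if "x \<in> ball 0 1" for x
  proof -
    have "(g has_field_derivative p x) (at x)"
      using g[OF that] at_within_open[OF that open_ball] by simp
    from DERIV_diff[OF this DERIV_const[of "g 0"]] show ?thesis unfolding f_def by simp
  qed
  have df: "deriv f z = p z" if "z \<in> ball 0 1" for z
    using DERIV_imp_deriv[OF fd[OF that]] .
  have holf: "f holomorphic_on ball 0 1"
    unfolding holomorphic_on_def using fd
    by (meson field_differentiable_at_within field_differentiable_def)
  have bt: "bounded_turning f"
    unfolding bounded_turning_def using holf df p0 re by (simp add: f_def)
  have d2: "deriv (deriv f) z = deriv p z" if "z \<in> ball 0 1" for z
    by (rule deriv_eq_on_ball[OF df that])
  have "(deriv ^^ 2) f 0 = deriv (deriv f) 0" by (simp add: numeral_2_eq_2)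
  also have "\<dots> = deriv p 0" using d2[of 0] by simp
  finally have e2: "(deriv ^^ 2) f 0 = deriv p 0" .
  have "(deriv ^^ 3) f 0 = deriv (deriv (deriv f)) 0" by (simp add: numeral_3_eq_3)
  also have "\<dots> = deriv (deriv p) 0" by (rule deriv_eq_on_ball[OF d2]) auto
  finally show ?thesis using bt e2 by blast
qed

lemma gamma_bounds:
  fixes P1 P2 :: complex
  assumes H: "cmod (P2 - P1\<^sup>2) \<le> 4 - (cmod P1)\<^sup>2"
  defines "G1 \<equiv> - (P1 / 2) / 2"
    and "G2 \<equiv> - (P2 / 6 - 3 / 2 * (P1 / 2)\<^sup>2) / 2"
  shows "- 1/3 \<le> cmod G2 - cmod G1 \<and> cmod G2 - cmod G1 \<le> 1/3"
proof -
  define r where "r = cmod P1"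
  define W where "W = P2 - P1\<^sup>2"
  have r0: "r \<ge> 0" by (simp add: r_def)
  have g1: "cmod G1 = r / 4" by (simp add: G1_def r_def norm_divide)
  have eq: "G2 = - W / 12 + 5 / 48 * P1\<^sup>2"
    by (simp add: G2_def W_def field_simps power2_eq_square)
  have nW: "cmod W \<le> 4 - r\<^sup>2" using H by (simp add: W_def r_def)
  have nW0: "cmod W \<ge> 0" by simp
  have nP: "cmod (5 / 48 * P1\<^sup>2) = 5 / 48 * r\<^sup>2" by (simp add: norm_mult norm_power r_def)
  have nWd: "cmod (- W / 12) = cmod W / 12" by (simp add: norm_divide)
  have up: "cmod G2 \<le> cmod W / 12 + 5 / 48 * r\<^sup>2"
    unfolding eq using norm_triangle_ineq[of "- W / 12" "5 / 48 * P1\<^sup>2"] nP nWd by simp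
  have lo: "cmod G2 \<ge> 5 / 48 * r\<^sup>2 - cmod W / 12"
  proof -
    have "G2 = 5 / 48 * P1\<^sup>2 - W / 12" unfolding eq by simp
    moreover have "cmod (5 / 48 * P1\<^sup>2) - cmod (W / 12) \<le> cmod (5 / 48 * P1\<^sup>2 - W / 12)"
      by (rule norm_triangle_ineq2)
    ultimately show ?thesis using nP by (simp add: norm_divide)
  qed
  have r2: "r \<le> 2"
  proof -
    have "r\<^sup>2 \<le> 2\<^sup>2" using nW nW0 by (simp only: power2_eq_square)
    then show ?thesis by (rule power2_le_imp_le) simp
  qed
  have A: "cmod G2 - cmod G1 \<le> 1/3"
  proof -
    have h1: "r\<^sup>2 \<le> 12 * r" unfolding power2_eq_square using r0 r2 by (intro mult_right_mono) auto
    have h2: "cmod G2 - cmod G1 \<le> 1/3 - r\<^sup>2 / 12 + 5 / 48 * r\<^sup>2 - r / 4"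
      using up nW g1 by linarith
    show ?thesis using h1 h2 by linarith
  qed
  have B: "- 1/3 \<le> cmod G2 - cmod G1"
  proof (cases "r \<le> 4/3")
    case True
    then show ?thesis using g1 norm_ge_zero[of G2] by linarith
  next
    case False
    have h1: "0 \<le> r * (9 * r - 12)" using False r0 by simp
    have h2: "cmod G2 - cmod G1 \<ge> 5/48*r\<^sup>2 - 1/3 + r\<^sup>2/12 - r/4"
      using lo nW g1 by linarith
    have h3: "r * (9 * r - 12) = 9 * r\<^sup>2 - 12 * r" by (simp add: algebra_simps power2_eq_square)
    show ?thesis using h1 h2 h3 by linarith
  qed
  show ?thesis using A B by simp
qed


lemma gamma_eqs:
  "Gamma1 f = - ((deriv ^^ 2) f 0 / 2) / 2"
  "Gamma2 f = - ((deriv ^^ 3) f 0 / 6 - 3 / 2 * ((deriv ^^ 2) f 0 / 2)\<^sup>2) / 2"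
  by (simp_all add: Gamma1_def Gamma2_def taylor_coeff_def numeral_3_eq_3 numeral_2_eq_2)

lemma example:
  fixes t :: real
  assumes t: "0 < t" "t < 1"
  defines "p \<equiv> \<lambda>z. complex_of_real t * ((1 + z) / (1 - z)) + complex_of_real (1 - t) * ((1 - z) / (1 + z))"
  shows "p holomorphic_on ball 0 1" "p 0 = 1" "\<And>z. z \<in> ball 0 1 \<Longrightarrow> Re (p z) > 0"
    "deriv p 0 = 4 * complex_of_real t - 2" "deriv (deriv p) 0 = 4"
proof -
  have n1: "1 - z \<noteq> 0" "1 + z \<noteq> 0" if "z \<in> ball 0 1" for z :: complex
  proof -
    have "cmod z < 1" using that by simp
    then show "1 - z \<noteq> 0" "1 + z \<noteq> 0" by (auto simp: add_eq_0_iff)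
  qed
  show "p holomorphic_on ball 0 1" unfolding p_def using n1 by (intro holomorphic_intros) auto
  show "p 0 = 1" unfolding p_def by (simp flip: of_real_add)
  show "Re (p z) > 0" if z: "z \<in> ball 0 1" for z
  proof -
    have a: "Re ((1 + z) / (1 - z)) > 0" using z by (intro re_M) simp
    have b: "Re ((1 - z) / (1 + z)) > 0" using z re_M[of "-z"] by simp
    have m: "\<And>r w. Re (complex_of_real r * w) = r * Re w" by simp
    have "Re (p z) = t * Re ((1 + z) / (1 - z)) + (1 - t) * Re ((1 - z) / (1 + z))"
      unfolding p_def by (simp only: plus_complex.sel m)
    then show ?thesis using a b t by (simp add: add_pos_pos)
  qed
  define D where "D z = complex_of_real t * (2 / (1 - z)\<^sup>2) - complex_of_real (1 - t) * (2 / (1 + z)\<^sup>2)" for z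
  have pd: "(p has_field_derivative D z) (at z)" if z: "z \<in> ball 0 1" for z
  proof -
    have sq: "1 + (z * z + z * 2) \<noteq> 0"
    proof -
      have "1 + (z * z + z * 2) = (1 + z) * (1 + z)" by (simp add: algebra_simps)
      then show ?thesis using n1[OF z] by simp
    qed
    show ?thesis unfolding p_def D_def using n1[OF z] sq
      by (auto intro!: derivative_eq_intros simp: field_simps power2_eq_square)
  qed
  have dp: "deriv p z = D z" if "z \<in> ball 0 1" for z
    using DERIV_imp_deriv[OF pd[OF that]] .
  show "deriv p 0 = 4 * complex_of_real t - 2"
    using dp[of 0] by (simp add: D_def algebra_simps)
  have "deriv (deriv p) 0 = deriv D 0" by (rule deriv_eq_on_ball[OF dp]) auto
  moreover have "(D has_field_derivative 4) (at 0)"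
    unfolding D_def by (auto intro!: derivative_eq_intros simp: field_simps power2_eq_square)
  ultimately show "deriv (deriv p) 0 = 4" using DERIV_imp_deriv by simp
qed


lemma example_bt:
  fixes t :: real
  assumes "0 < t" "t < 1"
  shows "\<exists>f. bounded_turning f \<and> (deriv ^^ 2) f 0 = 4 * complex_of_real t - 2
             \<and> (deriv ^^ 3) f 0 = 4"
  using exists_bt[OF example(1-3)[OF assms]] example(4,5)[OF assms] by metis

theorem mainTheorem10:
  shows "(\<forall>f. bounded_turning f \<longrightarrow>
            - 1/3 \<le> cmod (Gamma2 f) - cmod (Gamma1 f) \<and>
            cmod (Gamma2 f) - cmod (Gamma1 f) \<le> 1/3) \<and>
         (\<exists>f. bounded_turning f \<and> cmod (Gamma2 f) - cmod (Gamma1 f) = - 1/3) \<and>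
         (\<exists>f. bounded_turning f \<and> cmod (Gamma2 f) - cmod (Gamma1 f) = 1/3)"
proof (intro conjI)
  show "\<forall>f. bounded_turning f \<longrightarrow>
            - 1/3 \<le> cmod (Gamma2 f) - cmod (Gamma1 f) \<and>
            cmod (Gamma2 f) - cmod (Gamma1 f) \<le> 1/3"
  proof (intro allI impI)
    fix f assume bt: "bounded_turning f"
    have holf: "f holomorphic_on ball 0 1" and d0: "deriv f 0 = 1"
      and re: "\<And>z. z \<in> ball 0 1 \<Longrightarrow> Re (deriv f z) > 0"
      using bt unfolding bounded_turning_def by auto
    have holp: "deriv f holomorphic_on ball 0 1"
      by (rule holomorphic_deriv[OF holf open_ball])
    have H: "cmod (deriv (deriv (deriv f)) 0 - (deriv (deriv f) 0)\<^sup>2) \<le> 4 - (cmod (deriv (deriv f) 0))\<^sup>2"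
      by (rule carath[OF holp d0 re])
    have e2: "(deriv ^^ 2) f 0 = deriv (deriv f) 0" by (simp add: numeral_2_eq_2)
    have e3: "(deriv ^^ 3) f 0 = deriv (deriv (deriv f)) 0" by (simp add: numeral_3_eq_3)
    show "- 1/3 \<le> cmod (Gamma2 f) - cmod (Gamma1 f) \<and>
            cmod (Gamma2 f) - cmod (Gamma1 f) \<le> 1/3"
      using gamma_bounds[OF H] unfolding gamma_eqs e2 e3 by simp
  qed
  show "\<exists>f. bounded_turning f \<and> cmod (Gamma2 f) - cmod (Gamma1 f) = - 1/3"
  proof -
    obtain f where f: "bounded_turning f" "(deriv ^^ 2) f 0 = 4 * complex_of_real (5/6) - 2"
      "(deriv ^^ 3) f 0 = 4"
      using example_bt[of "5/6"] by auto
    have e: "(deriv ^^ 2) f 0 = 4/3" using f(2) by simp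
    have "cmod (Gamma2 f) - cmod (Gamma1 f) = - 1/3"
      unfolding gamma_eqs f(3) e by (simp add: power2_eq_square norm_divide)
    then show ?thesis using f(1) by blast
  qed
  show "\<exists>f. bounded_turning f \<and> cmod (Gamma2 f) - cmod (Gamma1 f) = 1/3"
  proof -
    obtain f where f: "bounded_turning f" "(deriv ^^ 2) f 0 = 4 * complex_of_real (1/2) - 2"
      "(deriv ^^ 3) f 0 = 4"
      using example_bt[of "1/2"] by auto
    have e: "(deriv ^^ 2) f 0 = 0" using f(2) by simp
    have "cmod (Gamma2 f) - cmod (Gamma1 f) = 1/3"
      unfolding gamma_eqs f(3) e by (simp add: power2_eq_square norm_divide)
    then show ?thesis using f(1) by blast
  qed
qed

end
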